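(* Let $A=(a_{ij})\in F$. Then $a_{22}=a_{11}'$ and $a_{21}=a_{12}'$, where $'$ denotes the automorphism of $K[X;Y]$ defined below.
   Context: $K$ is an infinite field of characteristic different from 2. Let $X=\{x_1,x_2,x_1',x_2'\}$ and $Y=\{y_1,y_2,y_1',y_2'\}$, and let $K[X;Y]\cong K[X]\otimes_K E(Y)$ be the free supercommutative algebra: the $x$'s are even commuting variables, the $y$'s are odd pairwise anticommuting variables, and $E(Y)$ is the Grassmann algebra on the vector space with basis $Y$. Put $C_1=\begin{pmatrix} x_1&y_1\\ y_1'&x_1'\end{pmatrix}$, $C_2=\begin{pmatrix} x_2&y_2\\ y_2'&x_2'\end{pmatrix}$, and let $F=K[C_1,C_2]$ be the unital $K$-subalgebra of $M_2(K[X;Y])$ generated by $C_1,C_2$. The map $'$ is the algebra automorphism of $K[X;Y]$ (of order two) given by $x_i\mapsto x_i'$, $x_i'\mapsto x_i$, $y_i\mapsto y_i'$, $y_i'\mapsto y_i$ for $i=1,2$. *)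

theory Defs
  imports Main
begin

text \<open>Index set for the variables: I1, I2, I1', I2' stand for the subscripts 1, 2, 1', 2'.
  The even variables are x_i and the odd variables are y_i for i in this index type.\<close>
datatype idx = I1 | I2 | I1' | I2'

text \<open>Fixed linear order on the odd variables (y1 < y2 < y1' < y2') used for the
  standard basis of the Grassmann algebra.\<close>
fun rank :: "idx \<Rightarrow> nat" where
  "rank I1 = 0" | "rank I2 = 1" | "rank I1' = 2" | "rank I2' = 3"

text \<open>A monomial x^e y_S: exponent vector of the even variables and the (ordered,
  increasing) set of odd variables occurring.\<close>
type_synonym mono = "(idx \<Rightarrow> nat) \<times> idx set"

text \<open>Elements of K[X;Y] = K[X] \<otimes> E(Y): coefficient functions on monomials
  (finitely supported ones, see sa_carrier).\<close>
type_synonym 'k sa = "mono \<Rightarrow> 'k"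

definition sa_carrier :: "('k::zero) sa set" where
  "sa_carrier = {f. finite {m. f m \<noteq> 0}}"

text \<open>Number of transpositions needed to bring y_S y_T (S, T disjoint) into increasing order.\<close>
definition inv_cnt :: "idx set \<Rightarrow> idx set \<Rightarrow> nat" where
  "inv_cnt S T = card {(a, b). a \<in> S \<and> b \<in> T \<and> rank b < rank a}"

definition sa_zero :: "('k::zero) sa" where
  "sa_zero = (\<lambda>m. 0)"

definition sa_one :: "('k::{zero,one}) sa" where
  "sa_one = (\<lambda>m. if m = ((\<lambda>_. 0), {}) then 1 else 0)"

definition sa_add :: "('k::plus) sa \<Rightarrow> 'k sa \<Rightarrow> 'k sa" where
  "sa_add f g = (\<lambda>m. f m + g m)"

definition sa_smult :: "'k::times \<Rightarrow> 'k sa \<Rightarrow> 'k sa" where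
  "sa_smult c f = (\<lambda>m. c * f m)"

text \<open>Supercommutative multiplication: x^e1 y_S1 * x^e2 y_S2 = sign * x^(e1+e2) y_(S1 \<union> S2)
  if S1, S2 are disjoint, and 0 otherwise.\<close>
definition sa_mult :: "('k::comm_ring_1) sa \<Rightarrow> 'k sa \<Rightarrow> 'k sa" where
  "sa_mult f g = (\<lambda>(e, S).
     \<Sum>e1\<in>{d. \<forall>i. d i \<le> e i}. \<Sum>S1\<in>Pow S.
        (-1) ^ inv_cnt S1 (S - S1) * f (e1, S1) * g (\<lambda>i. e i - e1 i, S - S1))"

definition sa_x :: "idx \<Rightarrow> ('k::{zero,one}) sa" where
  "sa_x i = (\<lambda>m. if m = ((\<lambda>j. if j = i then 1 else 0), {}) then 1 else 0)"

definition sa_y :: "idx \<Rightarrow> ('k::{zero,one}) sa" where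
  "sa_y i = (\<lambda>m. if m = ((\<lambda>_. 0), {i}) then 1 else 0)"

fun swap :: "idx \<Rightarrow> idx" where
  "swap I1 = I1'" | "swap I1' = I1" | "swap I2 = I2'" | "swap I2' = I2"

text \<open>The algebra automorphism ' of K[X;Y] with x_i \<mapsto> x_i', x_i' \<mapsto> x_i,
  y_i \<mapsto> y_i', y_i' \<mapsto> y_i, written out on the monomial basis:
  x^e y_S \<mapsto> (-1)^(inversions of swap on S) x^(e \<circ> swap) y_(swap ` S).\<close>
definition sa_prime :: "('k::comm_ring_1) sa \<Rightarrow> 'k sa" where
  "sa_prime f = (\<lambda>(e, S).
     (-1) ^ card {(a, b). a \<in> S \<and> b \<in> S \<and> rank a < rank b \<and> rank (swap b) < rank (swap a)}
     * f (e \<circ> swap, swap ` S))"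

datatype 'a mat2 = Mat2 (m11: 'a) (m12: 'a) (m21: 'a) (m22: 'a)

definition mat2_add :: "('k::comm_ring_1) sa mat2 \<Rightarrow> 'k sa mat2 \<Rightarrow> 'k sa mat2" where
  "mat2_add A B = Mat2 (sa_add (m11 A) (m11 B)) (sa_add (m12 A) (m12 B))
                       (sa_add (m21 A) (m21 B)) (sa_add (m22 A) (m22 B))"

definition mat2_mult :: "('k::comm_ring_1) sa mat2 \<Rightarrow> 'k sa mat2 \<Rightarrow> 'k sa mat2" where
  "mat2_mult A B = Mat2
     (sa_add (sa_mult (m11 A) (m11 B)) (sa_mult (m12 A) (m21 B)))
     (sa_add (sa_mult (m11 A) (m12 B)) (sa_mult (m12 A) (m22 B)))
     (sa_add (sa_mult (m21 A) (m11 B)) (sa_mult (m22 A) (m21 B)))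
     (sa_add (sa_mult (m21 A) (m12 B)) (sa_mult (m22 A) (m22 B)))"

definition mat2_smult :: "'k::comm_ring_1 \<Rightarrow> 'k sa mat2 \<Rightarrow> 'k sa mat2" where
  "mat2_smult c A = Mat2 (sa_smult c (m11 A)) (sa_smult c (m12 A))
                         (sa_smult c (m21 A)) (sa_smult c (m22 A))"

definition C1 :: "('k::comm_ring_1) sa mat2" where
  "C1 = Mat2 (sa_x I1) (sa_y I1) (sa_y I1') (sa_x I1')"

definition C2 :: "('k::comm_ring_1) sa mat2" where
  "C2 = Mat2 (sa_x I2) (sa_y I2) (sa_y I2') (sa_x I2')"

inductive_set F_alg :: "('k::comm_ring_1) sa mat2 set" where
  scalar: "Mat2 (sa_smult c sa_one) sa_zero sa_zero (sa_smult c sa_one) \<in> F_alg"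
| gen1: "C1 \<in> F_alg"
| gen2: "C2 \<in> F_alg"
| add: "A \<in> F_alg \<Longrightarrow> B \<in> F_alg \<Longrightarrow> mat2_add A B \<in> F_alg"
| mult: "A \<in> F_alg \<Longrightarrow> B \<in> F_alg \<Longrightarrow> mat2_mult A B \<in> F_alg"
| smult: "A \<in> F_alg \<Longrightarrow> mat2_smult c A \<in> F_alg"

end

theory Submission imports Defs begin

definition allp :: "(idx \<times> idx) list" where
 "allp = List.product [I1,I2,I1',I2'] [I1,I2,I1',I2']"

definition sgP :: "(idx \<Rightarrow> bool) \<Rightarrow> nat" where
 "sgP S = length (filter (\<lambda>(a, b). S a \<and> S b \<and> rank a < rank b \<and> rank (swap b) < rank (swap a)) allp)"
definition invP :: "(idx \<Rightarrow> bool) \<Rightarrow> (idx \<Rightarrow> bool) \<Rightarrow> nat" where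
 "invP S T = length (filter (\<lambda>(a, b). S a \<and> T b \<and> rank b < rank a) allp)"

lemma brute1: "\<forall>ys\<in>set (subseqs [I1,I2,I1',I2']). \<forall>zs\<in>set (subseqs ys).
  even (sgP (\<lambda>x. x \<in> set ys) + invP (\<lambda>x. swap x \<in> set zs) (\<lambda>x. swap x \<in> set ys \<and> swap x \<notin> set zs)) =
  even (invP (\<lambda>x. x \<in> set zs) (\<lambda>x. x \<in> set ys \<and> x \<notin> set zs) + sgP (\<lambda>x. x \<in> set zs) + sgP (\<lambda>x. x \<in> set ys \<and> x \<notin> set zs))"
  unfolding sgP_def invP_def allp_def by code_simp

lemma brute2: "\<forall>ys\<in>set (subseqs [I1,I2,I1',I2']). even (sgP (\<lambda>x. x \<in> set ys) + sgP (\<lambda>x. swap x \<in> set ys))"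
  unfolding sgP_def allp_def by code_simp

lemma swap_swap[simp]: "swap (swap i) = i" by (cases i) auto

lemma inj_swap: "inj swap" by (metis injI swap_swap)

lemma mem_swap_img[simp]: "x \<in> swap ` S \<longleftrightarrow> swap x \<in> S"
  by (metis image_iff swap_swap)

lemma swap_img_img[simp]: "swap ` swap ` S = S" by auto

lemma L_univ: "set [I1,I2,I1',I2'] = UNIV"
proof -
  have "x \<in> set [I1,I2,I1',I2']" for x by (cases x) auto
  then show ?thesis by blast
qed

lemma allp_univ: "set allp = UNIV"
  unfolding allp_def set_product L_univ by simp

lemma card_pairs: "card {(a, b). P a b} = length (filter (\<lambda>(a,b). P a b) allp)"
proof -
  have A: "{(a, b). P a b} = set (filter (\<lambda>(a,b). P a b) allp)"
    unfolding set_filter allp_univ by simp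
  have "distinct allp" unfolding allp_def by (rule distinct_product) simp_all
  then have "distinct (filter (\<lambda>(a,b). P a b) allp)" by (rule distinct_filter)
  then show ?thesis unfolding A by (rule distinct_card)
qed

definition sg :: "idx set \<Rightarrow> nat" where
 "sg S = card {(a, b). a \<in> S \<and> b \<in> S \<and> rank a < rank b \<and> rank (swap b) < rank (swap a)}"

lemma sg_eq: "sg S = sgP (\<lambda>x. x \<in> S)"
  unfolding sg_def sgP_def card_pairs ..

lemma inv_eq: "inv_cnt S T = invP (\<lambda>x. x \<in> S) (\<lambda>x. x \<in> T)"
  unfolding inv_cnt_def invP_def card_pairs ..

lemma obtain_list: obtains ys where "S = set ys" "ys \<in> set (subseqs [I1,I2,I1',I2'])"
proof -
  have "S \<in> set ` set (subseqs [I1,I2,I1',I2'])" unfolding subseqs_powset L_univ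
    by simp
  then obtain ys where "ys \<in> set (subseqs [I1,I2,I1',I2'])" "S = set ys" by (rule imageE)
  then show ?thesis using that by blast
qed

lemma pow_parity: "even a = even b \<Longrightarrow> (-1::'a::ring_1)^a = (-1)^b"
  by (simp add: minus_one_power_iff)

lemma sign1:
  assumes "S1 \<subseteq> S"
  shows "(-1::'a::comm_ring_1)^sg S * (-1)^inv_cnt (swap`S1) (swap`S - swap`S1)
     = (-1)^inv_cnt S1 (S-S1) * (-1)^sg S1 * (-1)^sg (S-S1)"
proof -
  obtain ys where ys: "S = set ys" "ys \<in> set (subseqs [I1,I2,I1',I2'])" by (rule obtain_list)
  have "S1 \<in> set ` set (subseqs ys)" unfolding subseqs_powset using assms ys by auto
  then obtain zs where zs: "zs \<in> set (subseqs ys)" "S1 = set zs" by (rule imageE)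
  note B = brute1[rule_format, OF ys(2) zs(1)]
  have "even (sg S + inv_cnt (swap`S1) (swap`S - swap`S1)) = even (inv_cnt S1 (S-S1) + sg S1 + sg (S-S1))"
  proof -
    have e1: "sg S = sgP (\<lambda>x. x \<in> set ys)" by (simp add: sg_eq ys(1))
    have e2: "inv_cnt (swap`S1) (swap`S - swap`S1) = invP (\<lambda>x. swap x \<in> set zs) (\<lambda>x. swap x \<in> set ys \<and> swap x \<notin> set zs)"
      unfolding inv_eq ys(1) zs(2) by simp
    have e3: "inv_cnt S1 (S-S1) = invP (\<lambda>x. x \<in> set zs) (\<lambda>x. x \<in> set ys \<and> x \<notin> set zs)"
      unfolding inv_eq ys(1) zs(2) by simp
    have e4: "sg S1 = sgP (\<lambda>x. x \<in> set zs)" by (simp add: sg_eq zs(2))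
    have e5: "sg (S-S1) = sgP (\<lambda>x. x \<in> set ys \<and> x \<notin> set zs)" by (simp add: sg_eq ys(1) zs(2))
    show ?thesis unfolding e1 e2 e3 e4 e5 by (rule B)
  qed
  then have "(-1::'a)^(sg S + inv_cnt (swap`S1) (swap`S - swap`S1)) = (-1)^(inv_cnt S1 (S-S1) + sg S1 + sg (S-S1))"
    by (rule pow_parity)
  then show ?thesis by (simp add: power_add)
qed

lemma sign2: "(-1::'a::comm_ring_1)^sg S * (-1)^sg (swap`S) = 1"
proof -
  obtain ys where ys: "S = set ys" "ys \<in> set (subseqs [I1,I2,I1',I2'])" by (rule obtain_list)
  note B = brute2[rule_format, OF ys(2)]
  have e1: "sg S = sgP (\<lambda>x. x \<in> set ys)" by (simp add: sg_eq ys(1))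
  have e2: "sg (swap`S) = sgP (\<lambda>x. swap x \<in> set ys)" by (simp add: sg_eq ys(1))
  have "even (sg S + sg (swap`S))" unfolding e1 e2 by (rule B)
  then have "(-1::'a)^(sg S + sg (swap`S)) = 1" by simp
  then show ?thesis by (simp add: power_add)
qed

lemma prime_eq: "sa_prime f (e, S) = (-1)^sg S * f (e \<circ> swap, swap ` S)"
  unfolding sa_prime_def sg_def by simp

lemma prime_prime: "sa_prime (sa_prime f) = f"
proof (rule ext, clarify)
  fix e :: "idx \<Rightarrow> nat" and S
  have 1: "e \<circ> swap \<circ> swap = e" by (auto simp: o_def)
  have "sa_prime (sa_prime f) (e, S) = ((-1)^sg S * (-1)^sg (swap`S)) * f (e \<circ> swap \<circ> swap, swap`swap`S)"
    by (simp only: prime_eq mult.assoc)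
  also have "\<dots> = f (e, S)" by (simp only: 1 sign2 swap_img_img mult_1_left)
  finally show "sa_prime (sa_prime f) (e, S) = f (e, S)" .
qed

lemma pair_ext: "(\<And>e S. f (e, S) = g (e, S)) \<Longrightarrow> f = g"
  by (rule ext) (metis surj_pair)

lemma prime_add: "sa_prime (sa_add f g) = sa_add (sa_prime f) (sa_prime g)"
  by (rule pair_ext) (simp add: prime_eq sa_add_def distrib_left)

lemma prime_smult: "sa_prime (sa_smult c f) = sa_smult c (sa_prime f)"
  by (rule pair_ext) (simp add: prime_eq sa_smult_def mult.left_commute)

lemma comp_swap_eq: "(e \<circ> swap = d) \<longleftrightarrow> (e = d \<circ> swap)"
  by (auto simp: o_def fun_eq_iff) (metis swap_swap)+

lemma img_swap_eq: "(swap ` S = T) \<longleftrightarrow> (S = swap ` T)"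
  by auto

lemma sg_single: "sg {x} = 0" unfolding sg_def by (subst card_eq_0_iff) auto
lemma sg_empty: "sg {} = 0" unfolding sg_def by simp

lemma zero_comp: "(\<lambda>_. 0::nat) \<circ> swap = (\<lambda>_. 0)" by (simp add: o_def)

lemma swap_eq_iff: "(swap j = i) = (j = swap i)" by (cases i; cases j) auto

lemma delta_comp: "(\<lambda>j. if j = i then 1 else 0::nat) \<circ> swap = (\<lambda>j. if j = swap i then 1 else 0)"
  by (rule ext) (simp add: o_def swap_eq_iff)

lemma img_empty: "(swap ` S = {}) = (S = {})" by blast

lemma img_single: "(swap ` S = {i}) = (S = {swap i})"
  by (simp only: img_swap_eq image_insert image_empty)

lemma prime_one: "sa_prime sa_one = sa_one"
proof (rule pair_ext)
  fix e S
  have c: "((e \<circ> swap, swap ` S) = ((\<lambda>_. 0::nat), {})) = ((e, S) = ((\<lambda>_. 0), {}))"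
    by (simp only: prod.inject comp_swap_eq zero_comp img_empty)
  show "sa_prime sa_one (e, S) = sa_one (e, S)"
  proof (cases "(e, S) = ((\<lambda>_. 0::nat), {})")
    case True
    then have "S = {}" by simp
    then show ?thesis unfolding prime_eq sa_one_def c using True by (simp add: sg_empty)
  next
    case False
    then show ?thesis unfolding prime_eq sa_one_def c by (simp add: sg_empty)
  qed
qed

lemma prime_zero: "sa_prime sa_zero = sa_zero"
  by (rule pair_ext) (simp add: prime_eq sa_zero_def)

lemma prime_x: "sa_prime (sa_x i) = sa_x (swap i)"
proof (rule pair_ext)
  fix e S
  have c: "((e \<circ> swap, swap ` S) = ((\<lambda>j. if j = i then 1 else 0::nat), {})) =
     ((e, S) = ((\<lambda>j. if j = swap i then 1 else 0), {}))"
    by (simp only: prod.inject comp_swap_eq delta_comp img_empty)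
  show "sa_prime (sa_x i) (e, S) = sa_x (swap i) (e, S)"
  proof (cases "(e, S) = ((\<lambda>j. if j = swap i then 1 else 0::nat), {})")
    case True
    then have "S = {}" by simp
    then show ?thesis unfolding prime_eq sa_x_def c using True by (simp add: sg_empty)
  next
    case False
    then show ?thesis unfolding prime_eq sa_x_def c by (simp add: sg_empty)
  qed
qed

lemma prime_y: "sa_prime (sa_y i) = sa_y (swap i)"
proof (rule pair_ext)
  fix e S
  have c: "((e \<circ> swap, swap ` S) = ((\<lambda>_. 0::nat), {i})) = ((e, S) = ((\<lambda>_. 0), {swap i}))"
    by (simp only: prod.inject comp_swap_eq zero_comp img_single)
  show "sa_prime (sa_y i) (e, S) = sa_y (swap i) (e, S)"
  proof (cases "(e, S) = ((\<lambda>_. 0::nat), {swap i})")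
    case True
    then have "S = {swap i}" by simp
    then show ?thesis unfolding prime_eq sa_y_def c using True by (simp add: sg_single)
  next
    case False
    then show ?thesis unfolding prime_eq sa_y_def c by (simp add: sg_single)
  qed
qed


lemma mult_at: "sa_mult f g (e, S) = (\<Sum>e1\<in>{d. \<forall>i. d i \<le> e i}. \<Sum>S1\<in>Pow S.
        (-1) ^ inv_cnt S1 (S - S1) * f (e1, S1) * g (\<lambda>i. e i - e1 i, S - S1))"
  unfolding sa_mult_def by (simp only: case_prod_conv)

lemma prime_mult: "sa_prime (sa_mult f g) = sa_mult (sa_prime f) (sa_prime g)"
proof (rule pair_ext)
  fix e :: "idx \<Rightarrow> nat" and S
  define D where "D = (\<lambda>e::idx \<Rightarrow> nat. {d. \<forall>i. d i \<le> e i})"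
  have R1: "D (e \<circ> swap) = (\<lambda>d. d \<circ> swap) ` D e"
  proof
    show "(\<lambda>d. d \<circ> swap) ` D e \<subseteq> D (e \<circ> swap)" unfolding D_def by auto
    show "D (e \<circ> swap) \<subseteq> (\<lambda>d. d \<circ> swap) ` D e"
    proof
      fix d assume d: "d \<in> D (e \<circ> swap)"
      have "d = (d \<circ> swap) \<circ> swap" by (rule ext) simp
      moreover have "d \<circ> swap \<in> D e" using d unfolding D_def by (auto simp: o_def) (metis swap_swap)
      ultimately show "d \<in> (\<lambda>d. d \<circ> swap) ` D e" by blast
    qed
  qed
  have I1: "inj_on (\<lambda>d. d \<circ> swap) (D e)"
  proof (rule inj_onI)
    fix d d' assume "d \<circ> swap = d' \<circ> swap"
    then have "d \<circ> swap \<circ> swap = d' \<circ> swap \<circ> swap" by simp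
    then show "d = d'" by (simp add: o_def)
  qed
  have R2: "Pow (swap ` S) = image swap ` Pow S" by (rule image_Pow_surj[symmetric]) simp
  have I2: "inj_on (image swap) (Pow S)" by (rule inj_on_image_Pow) (rule inj_on_subset[OF inj_swap], simp)
  have "sa_prime (sa_mult f g) (e, S) = (-1)^sg S * (\<Sum>e1\<in>D (e \<circ> swap). \<Sum>S1\<in>Pow (swap ` S).
        (-1) ^ inv_cnt S1 (swap ` S - S1) * f (e1, S1) * g (\<lambda>i. (e \<circ> swap) i - e1 i, swap ` S - S1))"
    unfolding prime_eq mult_at D_def ..
  also have "\<dots> = (-1)^sg S * (\<Sum>d\<in>D e. \<Sum>T\<in>Pow S.
        (-1) ^ inv_cnt (swap ` T) (swap ` S - swap ` T) * f (d \<circ> swap, swap ` T) * g (\<lambda>i. (e \<circ> swap) i - (d \<circ> swap) i, swap ` S - swap ` T))"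
    unfolding R1 R2 sum.reindex[OF I1] sum.reindex[OF I2] by (simp only: o_def)
  also have "\<dots> = (\<Sum>d\<in>D e. \<Sum>T\<in>Pow S.
        (-1) ^ inv_cnt T (S - T) * ((-1)^sg T * f (d \<circ> swap, swap ` T)) * ((-1)^sg (S - T) * g ((\<lambda>i. e i - d i) \<circ> swap, swap ` (S - T))))"
    unfolding sum_distrib_left
  proof (intro sum.cong refl)
    fix d T assume "T \<in> Pow S"
    then have TS: "T \<subseteq> S" by simp
    have s: "swap ` (S - T) = swap ` S - swap ` T" by (rule image_set_diff[OF inj_swap])
    have h: "(\<lambda>i. (e \<circ> swap) i - (d \<circ> swap) i) = (\<lambda>i. e i - d i) \<circ> swap" by (simp add: o_def)
    have sg: "(-1::'a)^sg S * (-1)^inv_cnt (swap`T) (swap`S - swap`T)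
     = (-1)^inv_cnt T (S-T) * (-1)^sg T * (-1)^sg (S-T)" by (rule sign1[OF TS])
    show "(-1)^sg S * ((-1) ^ inv_cnt (swap ` T) (swap ` S - swap ` T) * f (d \<circ> swap, swap ` T) * g (\<lambda>i. (e \<circ> swap) i - (d \<circ> swap) i, swap ` S - swap ` T))
      = (-1) ^ inv_cnt T (S - T) * ((-1)^sg T * f (d \<circ> swap, swap ` T)) * ((-1)^sg (S - T) * g ((\<lambda>i. e i - d i) \<circ> swap, swap ` (S - T)))"
      unfolding s h
    proof -
      let ?F = "f (d \<circ> swap, swap ` T)" and ?G = "g ((\<lambda>i. e i - d i) \<circ> swap, swap ` S - swap ` T)"
      have "(-1)^sg S * ((-1) ^ inv_cnt (swap ` T) (swap ` S - swap ` T) * ?F * ?G)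
          = ((-1)^sg S * (-1) ^ inv_cnt (swap ` T) (swap ` S - swap ` T)) * ?F * ?G" by (simp only: mult.assoc)
      also have "\<dots> = ((-1)^inv_cnt T (S-T) * (-1)^sg T * (-1)^sg (S-T)) * ?F * ?G" by (simp only: sg)
      also have "\<dots> = (-1) ^ inv_cnt T (S - T) * ((-1)^sg T * ?F) * ((-1)^sg (S - T) * ?G)" by (simp only: ac_simps)
      finally show "(-1)^sg S * ((-1) ^ inv_cnt (swap ` T) (swap ` S - swap ` T) * ?F * ?G) = (-1) ^ inv_cnt T (S - T) * ((-1)^sg T * ?F) * ((-1)^sg (S - T) * ?G)" .
    qed
  qed
  also have "\<dots> = sa_mult (sa_prime f) (sa_prime g) (e, S)"
    unfolding mult_at prime_eq D_def ..
  finally show "sa_prime (sa_mult f g) (e, S) = sa_mult (sa_prime f) (sa_prime g) (e, S)" .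
qed

lemma sa_add_commute: "sa_add (f::'k::ab_semigroup_add sa) g = sa_add g f"
  unfolding sa_add_def by (rule ext) (simp add: add.commute)

theorem lemma4:
  fixes A :: "('k::field) sa mat2"
  assumes "infinite (UNIV :: 'k set)"
    and "(2::'k) \<noteq> 0"
    and "A \<in> F_alg"
  shows "m22 A = sa_prime (m11 A) \<and> m21 A = sa_prime (m12 A)"
  using assms(3)
proof (induction A rule: F_alg.induct)
  case (scalar c)
  then show ?case by (simp add: prime_smult prime_one prime_zero)
next
  case gen1
  then show ?case by (simp add: C1_def prime_x prime_y)
next
  case gen2
  then show ?case by (simp add: C2_def prime_x prime_y)
next
  case (add A B)
  then show ?case by (simp add: mat2_add_def prime_add)
next
  case (mult A B)
  have a22: "m22 A = sa_prime (m11 A)" and a21: "m21 A = sa_prime (m12 A)" using mult.IH(1) by auto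
  have b22: "m22 B = sa_prime (m11 B)" and b21: "m21 B = sa_prime (m12 B)" using mult.IH(2) by auto
  have b12: "m12 B = sa_prime (m21 B)" using b21 by (simp add: prime_prime)
  have b11: "m11 B = sa_prime (m22 B)" using b22 by (simp add: prime_prime)
  have "m22 (mat2_mult A B) = sa_add (sa_mult (m21 A) (m12 B)) (sa_mult (m22 A) (m22 B))"
    by (simp add: mat2_mult_def)
  also have "\<dots> = sa_add (sa_mult (sa_prime (m12 A)) (sa_prime (m21 B))) (sa_mult (sa_prime (m11 A)) (sa_prime (m11 B)))"
    using a21 b12 a22 b22 by simp
  also have "\<dots> = sa_prime (m11 (mat2_mult A B))"
    by (simp add: mat2_mult_def prime_add prime_mult sa_add_commute)
  finally have 1: "m22 (mat2_mult A B) = sa_prime (m11 (mat2_mult A B))" .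
  have "m21 (mat2_mult A B) = sa_add (sa_mult (m21 A) (m11 B)) (sa_mult (m22 A) (m21 B))"
    by (simp add: mat2_mult_def)
  also have "\<dots> = sa_add (sa_mult (sa_prime (m12 A)) (sa_prime (m22 B))) (sa_mult (sa_prime (m11 A)) (sa_prime (m12 B)))"
    using a21 b11 a22 b21 by simp
  also have "\<dots> = sa_prime (m12 (mat2_mult A B))"
    by (simp add: mat2_mult_def prime_add prime_mult sa_add_commute)
  finally have 2: "m21 (mat2_mult A B) = sa_prime (m12 (mat2_mult A B))" .
  show ?case using 1 2 by simp
next
  case (smult A c)
  then show ?case by (simp add: mat2_smult_def prime_smult)
qed

end
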